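(* Let $\mathbb{F}$ be an algebraically closed field of characteristic $0$, $D$ an $\mathbb{F}$-vector space with $\dim D=3$, and $\Gamma\subseteq D^{\ast}$ an additive subgroup with $\Gamma\simeq\mathbb{Z}^3$ and $\bigcap_{\alpha\in\Gamma}\ker\alpha=\{0\}$. Let $M=\bigoplus_{\theta\in\Gamma}M_\theta$ be a $\Gamma$-graded $\mathcal{S}(\Gamma,D)$-module with $\dim M_\theta=1$ for each $\theta$, and write $M_\theta=\mathbb{F}w_\theta$. Fix $0\neq\sigma\in\Gamma$, nonzero $\partial,\partial'\in\ker\sigma$ and $\nu\in\Gamma$, and define scalars $c_i$ ($i\in\mathbb{Z}$) by $x^{-\sigma}\partial'.x^{\sigma}\partial.w_{\nu+i\sigma}=c_iw_{\nu+i\sigma}$. Then $c_i=c$ is independent of $i$. Moreover, if $c\neq0$, then for each $a\in\{\sqrt c,-\sqrt c\}$ there exist nonzero $v_{\nu+i\sigma}\in M_{\nu+i\sigma}$ ($i\in\mathbb{Z}$) such that $x^{\sigma}\partial.v_{\nu+(i-1)\sigma}=a\,v_{\nu+i\sigma}$ and $x^{-\sigma}\partial'.v_{\nu+i\sigma}=a\,v_{\nu+(i-1)\sigma}$ for all $i\in\mathbb{Z}$.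
   Context: $\mathcal{S}(\Gamma,D)$ is the Lie algebra spanned by symbols $x^\alpha\partial$ with $\alpha\in\Gamma\setminus\{0\}$, $\partial\in\ker\alpha$ (linear in $\partial$), with bracket $[x^\alpha\partial_1,x^\beta\partial_2]=x^{\alpha+\beta}(\beta(\partial_1)\partial_2-\alpha(\partial_2)\partial_1)$ (the subalgebra of the generalized Witt algebra $\mathbb{F}[\Gamma]\otimes D$). A $\Gamma$-graded module satisfies $x^\alpha\partial.M_\theta\subseteq M_{\alpha+\theta}$. *)

theory Defs
  imports Main "HOL-Computational_Algebra.Polynomial"
begin

definition alg_closed :: "'a::field itself \<Rightarrow> bool" where
  "alg_closed _ \<longleftrightarrow> (\<forall>p::'a poly. degree p > 0 \<longrightarrow> (\<exists>x. poly p x = 0))"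

definition fadd :: "('d \<Rightarrow> 'a::field) \<Rightarrow> ('d \<Rightarrow> 'a) \<Rightarrow> ('d \<Rightarrow> 'a)" where
  "fadd \<alpha> \<beta> = (\<lambda>d. \<alpha> d + \<beta> d)"

definition fneg :: "('d \<Rightarrow> 'a::field) \<Rightarrow> ('d \<Rightarrow> 'a)" where
  "fneg \<alpha> = (\<lambda>d. - \<alpha> d)"

definition fzero :: "'d \<Rightarrow> 'a::field" where
  "fzero = (\<lambda>d. 0)"

definition fmul_int :: "int \<Rightarrow> ('d \<Rightarrow> 'a::field) \<Rightarrow> ('d \<Rightarrow> 'a)" where
  "fmul_int n \<alpha> = (\<lambda>d. of_int n * \<alpha> d)"

definition subgroup_Z3 :: "('d \<Rightarrow> 'a::field) set \<Rightarrow> bool" where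
  "subgroup_Z3 \<Gamma> \<longleftrightarrow>
     fzero \<in> \<Gamma> \<and> (\<forall>\<alpha>\<in>\<Gamma>. \<forall>\<beta>\<in>\<Gamma>. fadd \<alpha> \<beta> \<in> \<Gamma>) \<and> (\<forall>\<alpha>\<in>\<Gamma>. fneg \<alpha> \<in> \<Gamma>) \<and>
     (\<exists>f :: int \<Rightarrow> int \<Rightarrow> int \<Rightarrow> ('d \<Rightarrow> 'a).
        (\<forall>a b c a' b' c'. f (a + a') (b + b') (c + c') = fadd (f a b c) (f a' b' c')) \<and>
        inj (\<lambda>(a, b, c). f a b c) \<and> range (\<lambda>(a, b, c). f a b c) = \<Gamma>)"

definition graded_direct_sum ::
  "('d \<Rightarrow> 'a::field) set \<Rightarrow> (('d \<Rightarrow> 'a) \<Rightarrow> 'm::ab_group_add set) \<Rightarrow> bool" where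
  "graded_direct_sum \<Gamma> Mg \<longleftrightarrow>
     (\<forall>m::'m. \<exists>!f. (\<forall>\<theta>. \<theta> \<notin> \<Gamma> \<longrightarrow> f \<theta> = 0) \<and> finite {\<theta>. f \<theta> \<noteq> 0} \<and>
        (\<forall>\<theta>\<in>\<Gamma>. f \<theta> \<in> Mg \<theta>) \<and> m = (\<Sum>\<theta>\<in>{\<theta>. f \<theta> \<noteq> 0}. f \<theta>))"

(* act \<alpha> e is the action of x^\<alpha>e; M is a \<Gamma>-graded S(\<Gamma>,D)-module *)
definition graded_S_module ::
  "('a::field \<Rightarrow> 'd::ab_group_add \<Rightarrow> 'd) \<Rightarrow> ('d \<Rightarrow> 'a) set \<Rightarrow>
   ('a \<Rightarrow> 'm::ab_group_add \<Rightarrow> 'm) \<Rightarrow> (('d \<Rightarrow> 'a) \<Rightarrow> 'm set) \<Rightarrow>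
   (('d \<Rightarrow> 'a) \<Rightarrow> 'd \<Rightarrow> 'm \<Rightarrow> 'm) \<Rightarrow> bool" where
  "graded_S_module scaleD \<Gamma> scaleM Mg act \<longleftrightarrow>
     vector_space scaleM \<and>
     (\<comment> \<open>linear action of each x^\<alpha>e\<close>
      \<forall>\<alpha>\<in>\<Gamma>. \<forall>e. \<alpha> \<noteq> fzero \<longrightarrow> \<alpha> e = 0 \<longrightarrow> Vector_Spaces.linear scaleM scaleM (act \<alpha> e)) \<and>
     (
      \<forall>\<alpha>\<in>\<Gamma>. \<forall>e1 e2 c m. \<alpha> \<noteq> fzero \<longrightarrow> \<alpha> e1 = 0 \<longrightarrow> \<alpha> e2 = 0 \<longrightarrow>
         act \<alpha> (scaleD c e1 + e2) m = scaleM c (act \<alpha> e1 m) + act \<alpha> e2 m) \<and>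
     (\<comment> \<open>bracket relation [x^\<alpha>e1, x^\<beta>e2] = x^(\<alpha>+\<beta>)(\<beta>(e1)e2 - \<alpha>(e2)e1); it is 0 when \<alpha>+\<beta>=0\<close>
      \<forall>\<alpha>\<in>\<Gamma>. \<forall>\<beta>\<in>\<Gamma>. \<forall>e1 e2 m. \<alpha> \<noteq> fzero \<longrightarrow> \<beta> \<noteq> fzero \<longrightarrow> \<alpha> e1 = 0 \<longrightarrow> \<beta> e2 = 0 \<longrightarrow>
         act \<alpha> e1 (act \<beta> e2 m) - act \<beta> e2 (act \<alpha> e1 m) =
           (if fadd \<alpha> \<beta> = fzero then 0
            else act (fadd \<alpha> \<beta>) (scaleD (\<beta> e1) e2 - scaleD (\<alpha> e2) e1) m)) \<and>
     (
      \<forall>\<alpha>\<in>\<Gamma>. \<forall>\<theta>\<in>\<Gamma>. \<forall>e m. \<alpha> \<noteq> fzero \<longrightarrow> \<alpha> e = 0 \<longrightarrow> m \<in> Mg \<theta> \<longrightarrow>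
         act \<alpha> e m \<in> Mg (fadd \<alpha> \<theta>)) \<and>
     (\<forall>\<theta>\<in>\<Gamma>. module.subspace scaleM (Mg \<theta>)) \<and>
     graded_direct_sum \<Gamma> Mg"

end

theory Submission
  imports Defs
begin

lemma gen1:
  assumes vs: "vector_space sc" and sub: "module.subspace sc S" and d: "vector_space.dim sc S = 1"
  shows "\<exists>b. b \<noteq> 0 \<and> b \<in> S \<and> (\<forall>u\<in>S. \<exists>t. u = sc t b)"
proof -
  interpret V: vector_space sc by fact
  obtain B where B: "B \<subseteq> S" "V.independent B" "S \<subseteq> V.span B" "card B = V.dim S"
    by (rule V.basis_exists)
  then obtain b where b: "B = {b}" using d by (metis card_1_singletonE)
  have "b \<noteq> 0" using B(2) b V.dependent_zero by blast
  moreover have "b \<in> S" using B b by auto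
  moreover have "\<forall>u\<in>S. \<exists>t. u = sc t b" using B(3) b V.span_singleton by auto
  ultimately show ?thesis by blast
qed

lemma adj:
  assumes vs: "vector_space sc"
  and lX: "Vector_Spaces.linear sc sc X" and lY: "Vector_Spaces.linear sc sc Y"
  and comm: "\<forall>m. X (Y m) = Y (X m)"
  and b1: "b1 \<noteq> 0" "\<forall>u\<in>G1. \<exists>t. u = sc t b1" "b1 \<in> G1"
  and b2: "b2 \<noteq> 0" "\<forall>u\<in>G2. \<exists>t. u = sc t b2" "b2 \<in> G2"
  and XG: "\<forall>u\<in>G1. X u \<in> G2" and YG: "\<forall>u\<in>G2. Y u \<in> G1"
  shows "(\<forall>w\<in>G1. Y (X w) = sc c w) \<longleftrightarrow> (\<forall>w\<in>G2. Y (X w) = sc c w)"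
proof -
  interpret V: vector_space sc by fact
  have sX: "\<And>c x. X (sc c x) = sc c (X x)" using lX by (simp add: Vector_Spaces.linear_iff)
  have sY: "\<And>c x. Y (sc c x) = sc c (Y x)" using lY by (simp add: Vector_Spaces.linear_iff)
  obtain x where x: "X b1 = sc x b2" using XG b1 b2 by blast
  obtain y where y: "Y b2 = sc y b1" using YG b1 b2 by blast
  have e1: "Y (X b1) = sc (x*y) b1" using x y sY by simp
  have e2: "Y (X b2) = sc (x*y) b2" using x y sX comm by (metis V.scale_scale mult.commute)
  show ?thesis
  proof
    assume h: "\<forall>w\<in>G1. Y (X w) = sc c w"
    then have "x*y = c" using e1 b1 by auto
    then show "\<forall>w\<in>G2. Y (X w) = sc c w" using b2 e2 sX sY
      by (metis V.scale_scale mult.commute)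
  next
    assume h: "\<forall>w\<in>G2. Y (X w) = sc c w"
    then have "x*y = c" using e2 b2 by auto
    then show "\<forall>w\<in>G1. Y (X w) = sc c w" using b1 e1 sX sY
      by (metis V.scale_scale mult.commute)
  qed
qed

theorem lemma3p1:
  fixes scaleD :: "'a::field_char_0 \<Rightarrow> 'd::ab_group_add \<Rightarrow> 'd"
    and scaleM :: "'a \<Rightarrow> 'm::ab_group_add \<Rightarrow> 'm"
    and \<Gamma> :: "('d \<Rightarrow> 'a) set"
    and Mg :: "('d \<Rightarrow> 'a) \<Rightarrow> 'm set"
    and act :: "('d \<Rightarrow> 'a) \<Rightarrow> 'd \<Rightarrow> 'm \<Rightarrow> 'm"
    and \<sigma> \<nu> :: "'d \<Rightarrow> 'a"
    and e e' :: 'd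
  assumes F: "alg_closed TYPE('a)"
    and D: "vector_space scaleD" "vector_space.dim scaleD (UNIV :: 'd set) = 3"
    and Gamma_dual: "\<forall>\<alpha>\<in>\<Gamma>. Vector_Spaces.linear scaleD (*) \<alpha>"
    and Gamma_Z3: "subgroup_Z3 \<Gamma>"
    and Gamma_ker: "\<forall>d. (\<forall>\<alpha>\<in>\<Gamma>. \<alpha> d = 0) \<longrightarrow> d = 0"
    and M: "graded_S_module scaleD \<Gamma> scaleM Mg act"
    and dim1: "\<forall>\<theta>\<in>\<Gamma>. vector_space.dim scaleM (Mg \<theta>) = 1"
    and sigma: "\<sigma> \<in> \<Gamma>" "\<sigma> \<noteq> fzero"
    and d: "e \<noteq> 0" "\<sigma> e = 0"
    and d': "e' \<noteq> 0" "\<sigma> e' = 0"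
    and nu: "\<nu> \<in> \<Gamma>"
  shows "\<exists>c::'a.
    (\<forall>i::int. \<forall>w\<in>Mg (fadd \<nu> (fmul_int i \<sigma>)).
        act (fneg \<sigma>) e' (act \<sigma> e w) = scaleM c w) \<and>
    (c \<noteq> 0 \<longrightarrow> (\<forall>a::'a. a * a = c \<longrightarrow>
       (\<exists>v :: int \<Rightarrow> 'm. \<forall>i::int.
          v i \<in> Mg (fadd \<nu> (fmul_int i \<sigma>)) \<and> v i \<noteq> 0 \<and>
          act \<sigma> e (v (i - 1)) = scaleM a (v i) \<and>
          act (fneg \<sigma>) e' (v i) = scaleM a (v (i - 1)))))"
proof -
  interpret V: vector_space scaleM using M by (simp add: graded_S_module_def)
  have Mlin: "\<forall>\<alpha>\<in>\<Gamma>. \<forall>e. \<alpha> \<noteq> fzero \<longrightarrow> \<alpha> e = 0 \<longrightarrow> Vector_Spaces.linear scaleM scaleM (act \<alpha> e)"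
    and Mbr: "\<forall>\<alpha>\<in>\<Gamma>. \<forall>\<beta>\<in>\<Gamma>. \<forall>e1 e2 m. \<alpha> \<noteq> fzero \<longrightarrow> \<beta> \<noteq> fzero \<longrightarrow> \<alpha> e1 = 0 \<longrightarrow> \<beta> e2 = 0 \<longrightarrow>
         act \<alpha> e1 (act \<beta> e2 m) - act \<beta> e2 (act \<alpha> e1 m) =
           (if fadd \<alpha> \<beta> = fzero then 0
            else act (fadd \<alpha> \<beta>) (scaleD (\<beta> e1) e2 - scaleD (\<alpha> e2) e1) m)"
    and Mgr: "\<forall>\<alpha>\<in>\<Gamma>. \<forall>\<theta>\<in>\<Gamma>. \<forall>e m. \<alpha> \<noteq> fzero \<longrightarrow> \<alpha> e = 0 \<longrightarrow> m \<in> Mg \<theta> \<longrightarrow>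
         act \<alpha> e m \<in> Mg (fadd \<alpha> \<theta>)"
    and Msub: "\<forall>\<theta>\<in>\<Gamma>. module.subspace scaleM (Mg \<theta>)"
    using M unfolding graded_S_module_def by blast+
  have Gadd: "\<forall>\<alpha>\<in>\<Gamma>. \<forall>\<beta>\<in>\<Gamma>. fadd \<alpha> \<beta> \<in> \<Gamma>" and Gneg: "\<forall>\<alpha>\<in>\<Gamma>. fneg \<alpha> \<in> \<Gamma>"
    using Gamma_Z3 unfolding subgroup_Z3_def by blast+
  have ns: "fneg \<sigma> \<in> \<Gamma>" using Gneg sigma by blast
  have nsz: "fneg \<sigma> \<noteq> fzero"
  proof
    assume "fneg \<sigma> = fzero"
    then have "\<sigma> = fzero" unfolding fneg_def fzero_def by (metis minus_zero neg_equal_iff_equal)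
    then show False using sigma by simp
  qed
  have nse': "fneg \<sigma> e' = 0" using d' by (simp add: fneg_def)
  define g where "g i = fadd \<nu> (fmul_int i \<sigma>)" for i
  define X where "X = act \<sigma> e"
  define Y where "Y = act (fneg \<sigma>) e'"
  have gup: "fadd \<sigma> (g i) = g (i+1)" for i
    unfolding g_def fadd_def fmul_int_def by (rule ext) (simp add: algebra_simps)
  have gdn: "fadd (fneg \<sigma>) (g (i+1)) = g i" for i
    unfolding g_def fadd_def fmul_int_def fneg_def by (rule ext) (simp add: algebra_simps)
  have gdn': "fadd (fneg \<sigma>) (g i) = g (i - 1)" for i
    using gdn[of "i - 1"] by simp
  have g0: "g 0 = \<nu>" unfolding g_def fadd_def fmul_int_def by (rule ext) simp
  have gG: "g i \<in> \<Gamma>" for i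
  proof (induction i rule: int_induct[where k=0])
    case base then show ?case using g0 nu by simp
  next
    case (step1 i) then show ?case using gup[of i] Gadd sigma by metis
  next
    case (step2 i) then show ?case using gdn'[of i] Gadd ns by metis
  qed
  have lX: "Vector_Spaces.linear scaleM scaleM X" unfolding X_def using Mlin sigma d by blast
  have lY: "Vector_Spaces.linear scaleM scaleM Y" unfolding Y_def using Mlin ns nsz nse' by blast
  have sX: "\<And>c x. X (scaleM c x) = scaleM c (X x)" and aX: "\<And>x y. X (x + y) = X x + X y"
    using lX by (simp_all add: Vector_Spaces.linear_iff)
  have sY: "\<And>c x. Y (scaleM c x) = scaleM c (Y x)" and aY: "\<And>x y. Y (x + y) = Y x + Y y"
    using lY by (simp_all add: Vector_Spaces.linear_iff)
  have X0: "X 0 = 0" using aX[of 0 0] by simp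
  have Y0: "Y 0 = 0" using aY[of 0 0] by simp
  have ffz: "fadd \<sigma> (fneg \<sigma>) = fzero" unfolding fadd_def fneg_def fzero_def by simp
  have comm: "\<forall>m. X (Y m) = Y (X m)"
  proof
    fix m
    have "X (Y m) - Y (X m) = 0"
      using Mbr sigma ns nsz d nse' ffz unfolding X_def Y_def by simp
    then show "X (Y m) = Y (X m)" by simp
  qed
  have XG: "\<forall>u\<in>Mg (g i). X u \<in> Mg (g (i+1))" for i
    using Mgr sigma d gG[of i] gup[of i] unfolding X_def by metis
  have YG: "\<forall>u\<in>Mg (g (i+1)). Y u \<in> Mg (g i)" for i
    using Mgr ns nsz nse' gG[of "i+1"] gdn[of i] unfolding Y_def by metis
  have "\<forall>i. \<exists>b. b \<noteq> 0 \<and> b \<in> Mg (g i) \<and> (\<forall>u\<in>Mg (g i). \<exists>t. u = scaleM t b)"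
    using gen1[OF V.vector_space_axioms] Msub dim1 gG by blast
  then obtain B where B: "\<And>i. B i \<noteq> 0" "\<And>i. B i \<in> Mg (g i)"
    "\<And>i. \<forall>u\<in>Mg (g i). \<exists>t. u = scaleM t (B i)"
    by metis
  have "Y (X (B 0)) \<in> Mg (g 0)" using XG[of 0] YG[of 0] B(2)[of 0] by simp
  then obtain c where c: "Y (X (B 0)) = scaleM c (B 0)" using B(3) by blast
  have P0: "\<forall>w\<in>Mg (g 0). Y (X w) = scaleM c w"
  proof
    fix w assume "w \<in> Mg (g 0)"
    then obtain t where "w = scaleM t (B 0)" using B(3) by blast
    then show "Y (X w) = scaleM c w" using c sX sY by (simp add: mult.commute)
  qed
  have adjI: "(\<forall>w\<in>Mg (g i). Y (X w) = scaleM c w) \<longleftrightarrow> (\<forall>w\<in>Mg (g (i+1)). Y (X w) = scaleM c w)" for i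
    by (rule adj[OF V.vector_space_axioms lX lY comm B(1) B(3) B(2) B(1) B(3) B(2) XG YG])
  have P: "\<forall>w\<in>Mg (g i). Y (X w) = scaleM c w" for i
  proof (induction i rule: int_induct[where k=0])
    case base then show ?case using P0 by simp
  next
    case (step1 i) then show ?case using adjI[of i] by blast
  next
    case (step2 i) then show ?case using adjI[of "i - 1"] by simp
  qed
  have part2: "c \<noteq> 0 \<longrightarrow> (\<forall>a::'a. a * a = c \<longrightarrow>
       (\<exists>v :: int \<Rightarrow> 'm. \<forall>i::int.
          v i \<in> Mg (g i) \<and> v i \<noteq> 0 \<and>
          X (v (i - 1)) = scaleM a (v i) \<and>
          Y (v i) = scaleM a (v (i - 1))))"
  proof (intro impI allI)
    fix a :: 'a assume c0: "c \<noteq> 0" and ac: "a * a = c"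
    have a0: "a \<noteq> 0" using c0 ac by auto
    define Xa where "Xa u = scaleM (inverse a) (X u)" for u
    define Ya where "Ya u = scaleM (inverse a) (Y u)" for u
    define v where "v i = (if 0 \<le> i then (Xa ^^ nat i) (B 0) else (Ya ^^ nat (- i)) (B 0))" for i
    have R1: "v i = Xa (v (i - 1))" if "1 \<le> i" for i
    proof -
      have "nat i = Suc (nat (i - 1))" using that by simp
      then show ?thesis using that unfolding v_def by simp
    qed
    have R2: "v (i - 1) = Ya (v i)" if "i \<le> 0" for i
    proof -
      have "nat (- (i - 1)) = Suc (nat (- i))" using that by simp
      then show ?thesis using that unfolding v_def by auto
    qed
    have inv1: "Xa (Ya u) = u" if "u \<in> Mg (g i)" for u i
    proof -
      have "u \<in> Mg (g ((i - 1) + 1))" using that by simp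
      then have "Y u \<in> Mg (g (i - 1))" using YG[of "i - 1"] by blast
      then have "X (Y u) = scaleM c u" using P[of i] that comm by simp
      moreover have "inverse a * (inverse a * c) = 1" using a0 ac c0 by (simp add: field_simps)
      ultimately show ?thesis unfolding Xa_def Ya_def using sX by simp
    qed
    have inv2: "Ya (Xa u) = u" if "u \<in> Mg (g i)" for u i
    proof -
      have "Y (X u) = scaleM c u" using P[of i] that by simp
      moreover have "inverse a * (inverse a * c) = 1" using a0 ac c0 by (simp add: field_simps)
      ultimately show ?thesis unfolding Xa_def Ya_def using sY by simp
    qed
    have vG: "v i \<in> Mg (g i)" for i
    proof (induction i rule: int_induct[where k=0])
      case base then show ?case using B(2)[of 0] by (simp add: v_def)
    next
      case (step1 i)
      then have "X (v i) \<in> Mg (g (i+1))" using XG by blast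
      then have "Xa (v i) \<in> Mg (g (i+1))" unfolding Xa_def
        using Msub gG V.subspace_scale by blast
      then show ?case using R1[of "i+1"] step1 by simp
    next
      case (step2 i)
      have "v i \<in> Mg (g ((i - 1) + 1))" using step2 by simp
      then have "Y (v i) \<in> Mg (g (i - 1))" using YG[of "i - 1"] by blast
      then have "Ya (v i) \<in> Mg (g (i - 1))" unfolding Ya_def
        using Msub gG V.subspace_scale by blast
      then show ?case using R2[of i] step2 by simp
    qed
    have Q1: "v i = Xa (v (i - 1))" for i
    proof (cases "1 \<le> i")
      case True then show ?thesis by (rule R1)
    next
      case False
      then have "v (i - 1) = Ya (v i)" by (intro R2) simp
      then show ?thesis using inv1[OF vG[of i]] by simp
    qed
    have Q2: "v (i - 1) = Ya (v i)" for i
    proof (cases "i \<le> 0")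
      case True then show ?thesis by (rule R2)
    next
      case False
      then have "v i = Xa (v (i - 1))" by (intro R1) simp
      then show ?thesis using inv2[OF vG[of "i - 1"]] by simp
    qed
    have Xa0: "Xa 0 = 0" unfolding Xa_def using X0 by simp
    have Ya0: "Ya 0 = 0" unfolding Ya_def using Y0 by simp
    have vnz: "v i \<noteq> 0" for i
    proof (induction i rule: int_induct[where k=0])
      case base then show ?case using B(1)[of 0] by (simp add: v_def)
    next
      case (step1 i) then show ?case using Q2[of "i+1"] Ya0 by auto
    next
      case (step2 i) then show ?case using Q1[of i] Xa0 by auto
    qed
    show "\<exists>v :: int \<Rightarrow> 'm. \<forall>i::int.
          v i \<in> Mg (g i) \<and> v i \<noteq> 0 \<and>
          X (v (i - 1)) = scaleM a (v i) \<and>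
          Y (v i) = scaleM a (v (i - 1))"
    proof (intro exI allI conjI)
      fix i
      show "v i \<in> Mg (g i)" by (rule vG)
      show "v i \<noteq> 0" by (rule vnz)
      show "X (v (i - 1)) = scaleM a (v i)"
        using Q1[of i] a0 unfolding Xa_def by simp
      show "Y (v i) = scaleM a (v (i - 1))"
        using Q2[of i] a0 unfolding Ya_def by simp
    qed
  qed
  show ?thesis
    using P part2 unfolding g_def X_def Y_def by blast
qed

end
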